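(* Let $C\subseteq\mathbb{R}^p$ be a closed convex set with $0\in\mathrm{relint}(C)$, let $\mathcal{K}=C^\circ$, let $X\in\mathbb{R}^{n\times p}$ and $y\in\mathbb{R}^n$, and let $f_\eta=\eta^TX^T(I-P_{XC^\perp})y$ for $\eta\in\mathcal{K}$. Then $\sup_{\eta\in\mathcal{K}}f_\eta\le M$ for some constant $M<\infty$.
   Context: $C^\circ=\{v: v^Tu\le1\text{ for all }u\in C\}$ is the polar set; $C^\perp=\{v: v\perp C\}$; $P_{XC^\perp}$ is the orthogonal projection of $\mathbb{R}^n$ onto the subspace $XC^\perp=\{Xv: v\in C^\perp\}$. *)

theory Defs
  imports "HOL-Analysis.Analysis"
begin

definition polar_set :: "'a::real_inner set \<Rightarrow> 'a set" where
  "polar_set C = {v. \<forall>u\<in>C. v \<bullet> u \<le> 1}"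

(* Orthogonal projection onto a (closed) subspace S: the nearest point of S.
   For a subspace S of a finite-dimensional space this is the usual
   orthogonal projection P_S. *)
definition orth_proj :: "'a::euclidean_space set \<Rightarrow> 'a \<Rightarrow> 'a" where
  "orth_proj S x = closest_point S x"

end

theory Submission
  imports Defs
begin

theorem lemma7:
  fixes C :: "(real ^ 'p) set"
    and X :: "real ^ 'p ^ 'n"
    and y :: "real ^ 'n"
    and f :: "real ^ 'p \<Rightarrow> real"
  assumes "closed C" and "convex C" and "0 \<in> rel_interior C"
    and "f = (\<lambda>\<eta>. \<eta> \<bullet> (transpose X *v (y - orth_proj ((\<lambda>v. X *v v) ` (orthogonal_comp C)) y)))"
  shows "\<exists>M::real. \<forall>\<eta>\<in>polar_set C. f \<eta> \<le> M"
proof -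
  define S where "S = (\<lambda>v. X *v v) ` (orthogonal_comp C)"
  define P where "P = closest_point S y"
  define w where "w = transpose X *v (y - P)"
  have lin: "linear (\<lambda>v. X *v v)" by (simp add: matrix_vector_mul_linear)
  have subS: "subspace S" unfolding S_def
    by (rule linear_subspace_image[OF lin subspace_orthogonal_comp])
  have clS: "closed S" using subS closed_subspace by blast
  have cvS: "convex S" using subS subspace_imp_convex by blast
  have PS: "P \<in> S" unfolding P_def
    using subS clS closest_point_in_set subspace_0 by blast
  have orth: "(y - P) \<bullet> s = 0" if "s \<in> S" for s
  proof -
    have "P + s \<in> S" "P - s \<in> S" using subS PS that subspace_add subspace_diff by blast+
    from closest_point_dot[OF cvS clS this(1), of y] closest_point_dot[OF cvS clS this(2), of y]
    show ?thesis unfolding P_def by (simp add: inner_diff_right)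
  qed
  have wC: "w \<in> span C"
  proof -
    have "w \<in> orthogonal_comp (orthogonal_comp (span C))"
      unfolding orthogonal_comp_def orthogonal_def
    proof (clarify)
      fix v assume v: "\<forall>u\<in>span C. u \<bullet> v = 0"
      have "v \<in> orthogonal_comp C" using v span_superset
        by (auto simp: orthogonal_comp_def orthogonal_def)
      hence "X *v v \<in> S" unfolding S_def by blast
      hence "(y - P) \<bullet> (X *v v) = 0" by (rule orth)
      thus "v \<bullet> w = 0" unfolding w_def
        by (metis dot_lmul_matrix inner_commute vector_transpose_matrix)
    qed
    thus ?thesis using orthogonal_comp_self[OF subspace_span, of C] by simp
  qed
  obtain e where e: "e > 0" "cball 0 e \<inter> affine hull C \<subseteq> C"
    using assms(3) mem_rel_interior_cball by blast
  have "0 \<in> C" using assms(3) rel_interior_subset by blast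
  hence ah: "affine hull C = span C" by (simp add: affine_hull_span_0 hull_inc)
  have fw: "f \<eta> = \<eta> \<bullet> w" for \<eta>
    using assms(4) by (simp add: w_def P_def S_def orth_proj_def)
  show ?thesis
  proof (intro exI ballI)
    fix \<eta> assume eta: "\<eta> \<in> polar_set C"
    show "f \<eta> \<le> norm w / e"
    proof (cases "w = 0")
      case True thus ?thesis using fw by simp
    next
      case False
      define u where "u = (e / norm w) *\<^sub>R w"
      have "u \<in> span C" unfolding u_def using wC span_mul by blast
      moreover have "norm u = e" unfolding u_def using False e by simp
      ultimately have "u \<in> C" using e ah by auto
      hence "\<eta> \<bullet> u \<le> 1" using eta unfolding polar_set_def by blast
      hence "(e / norm w) * (\<eta> \<bullet> w) \<le> 1" unfolding u_def by simp
      hence "\<eta> \<bullet> w \<le> norm w / e" using False e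
        by (simp add: field_simps mult.commute)
      thus ?thesis using fw by simp
    qed
  qed
qed

end
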